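(* Under the standing assumptions, for any fixed $\lambda>0$, with $\eta_1=\frac1d+\frac{\lambda}{n^{1-(k-1)\alpha}\ln d}$, $$\sum_{0\le S\le n\eta_1}\Phi(S)\le \exp\left\{\frac{k\lambda p r}{1-p}\right\}+o(1)\quad (n\to\infty),$$ the sum being over integers $S$.
   Context: Parameters: integer $k\ge2$, constants $\alpha>0$, $r>0$, $0<p<1$; $d=n^{\alpha}$ (treated as an integer), $m=n\ln d$, $\tau=\frac1{1-p}$, $r_{cr}=\frac1{\ln\tau}$. Standing assumptions: $(2k-1)\alpha>1$, $k\alpha\le1$, $k\ge\frac{\tau\ln\tau}{\tau-1}$, and $r<r_{cr}$. Notation: $f(s)=1+\frac{p}{1-p}\cdot\frac{s^k-d^{-k}}{1-d^{-k}}$ for $s\in[0,1]$; $B(S)=\binom{n}{S}\left(\frac1d\right)^{S}\left(1-\frac1d\right)^{n-S}$; $W(S)=f(S/n)^{rm}$; $\Phi(S)=B(S)W(S)$ for $S=0,1,\dots,n$. Limits are as $n\to\infty$ with all constants fixed. *)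

theory Defs
  imports Complex_Main
begin

definition dd :: "real \<Rightarrow> nat \<Rightarrow> real" where
  "dd \<alpha> n = real n powr \<alpha>"

definition mm :: "real \<Rightarrow> nat \<Rightarrow> real" where
  "mm \<alpha> n = real n * ln (dd \<alpha> n)"

definition tau :: "real \<Rightarrow> real" where
  "tau p = 1 / (1 - p)"

definition r_cr :: "real \<Rightarrow> real" where
  "r_cr p = 1 / ln (tau p)"

definition ff :: "nat \<Rightarrow> real \<Rightarrow> real \<Rightarrow> nat \<Rightarrow> real \<Rightarrow> real" where
  "ff k \<alpha> p n s = 1 + p / (1 - p) *
     ((s ^ k - (1 / dd \<alpha> n) ^ k) / (1 - (1 / dd \<alpha> n) ^ k))"

definition BB :: "real \<Rightarrow> nat \<Rightarrow> nat \<Rightarrow> real" where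
  "BB \<alpha> n S = real (n choose S) * (1 / dd \<alpha> n) ^ S * (1 - 1 / dd \<alpha> n) ^ (n - S)"

definition WW :: "nat \<Rightarrow> real \<Rightarrow> real \<Rightarrow> real \<Rightarrow> nat \<Rightarrow> nat \<Rightarrow> real" where
  "WW k \<alpha> r p n S = ff k \<alpha> p n (real S / real n) powr (r * mm \<alpha> n)"

definition Phi :: "nat \<Rightarrow> real \<Rightarrow> real \<Rightarrow> real \<Rightarrow> nat \<Rightarrow> nat \<Rightarrow> real" where
  "Phi k \<alpha> r p n S = BB \<alpha> n S * WW k \<alpha> r p n S"

definition eta1 :: "nat \<Rightarrow> real \<Rightarrow> real \<Rightarrow> nat \<Rightarrow> real" where
  "eta1 k \<alpha> lam n = 1 / dd \<alpha> n
     + lam / (real n powr (1 - (real k - 1) * \<alpha>) * ln (dd \<alpha> n))"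

end

theory Submission
  imports Defs
begin


lemma g_lim: "((\<lambda>t::real. ((1+t)^k - 1)/t) \<longlongrightarrow> real k) (at 0)"
proof -
  have "((\<lambda>t::real. (1+t)^k) has_field_derivative real k * (1+0)^(k-1)) (at 0)"
    by (auto intro!: derivative_eq_intros)
  then have "((\<lambda>y. ((1+y)^k - (1+0)^k) / (y - 0)) \<longlongrightarrow> real k * (1+0)^(k-1)) (at (0::real))"
    by (rule iffD1[OF has_field_derivative_iff])
  then show ?thesis by simp
qed

lemma aux_alg:
  fixes t X F c r M A :: real
  assumes "t \<noteq> 0" "X \<noteq> 1" "F = c * (X * A) / (1 - X)"
  shows "r * c * (M * X * t) * (A / t) / (1 - X) = r * M * F"
proof -
  have "r * c * (M * X * t) * (A / t) / (1 - X) = r * M * (c * (X * A) / (1 - X))"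
    using assms(1) by (simp add: field_simps)
  then show ?thesis using assms(3) by simp
qed

lemma key_lim:
  fixes k :: nat and \<alpha> r p lam :: real
  assumes a: "\<alpha> > 0" and ka: "real k * \<alpha> \<le> 1" and lam: "lam > 0" and p: "0 < p" "p < 1" and k1: "k \<ge> 1"
  shows "((\<lambda>n. r * mm \<alpha> n * (ff k \<alpha> p n (eta1 k \<alpha> lam n) - 1))
           \<longlongrightarrow> r * (p/(1-p)) * lam * real k) sequentially"
proof -
  define x where "x n = real n powr (-\<alpha>)" for n :: nat
  define t where "t n = lam * real n powr (real k*\<alpha>-1) / (\<alpha> * ln (real n))" for n :: nat
  define c where "c = p/(1-p)"
  have ev2: "\<forall>\<^sub>F n in sequentially. n \<ge> (2::nat)" by (rule eventually_ge_at_top)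
  have xlim: "(x \<longlongrightarrow> 0) sequentially"
    unfolding x_def using a by (intro tendsto_neg_powr filterlim_real_sequentially) auto
  have ln_top: "filterlim (\<lambda>n::nat. ln (real n)) at_top sequentially"
    using filterlim_compose[OF ln_at_top filterlim_real_sequentially] by (simp add: o_def)
  have up: "((\<lambda>n::nat. (lam/\<alpha>) * inverse (ln (real n))) \<longlongrightarrow> (lam/\<alpha>) * 0) sequentially"
    by (intro tendsto_intros tendsto_inverse_0_at_top ln_top)
  have tpos: "\<forall>\<^sub>F n in sequentially. t n > 0"
    using ev2 proof eventually_elim
    case (elim n) then show ?case unfolding t_def using a lam by (auto intro!: divide_pos_pos)
  qed
  have tle: "\<forall>\<^sub>F n in sequentially. t n \<le> (lam/\<alpha>) * inverse (ln (real n))"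
    using ev2 proof eventually_elim
    case (elim n)
    have "real n powr (real k*\<alpha>-1) \<le> real n powr 0"
      using elim ka by (intro powr_mono) auto
    then have "real n powr (real k*\<alpha>-1) \<le> 1" using elim by simp
    moreover have "ln (real n) > 0" using elim by simp
    ultimately show ?case unfolding t_def using a lam
      by (simp add: field_simps mult_left_mono)
  qed
  have tlim: "(t \<longlongrightarrow> 0) sequentially"
  proof (rule tendsto_sandwich[OF _ tle tendsto_const])
    show "\<forall>\<^sub>F n in sequentially. 0 \<le> t n" using tpos by (auto elim: eventually_mono)
    show "(\<lambda>n. lam / \<alpha> * inverse (ln (real n))) \<longlonglongrightarrow> 0" using up by simp
  qed
  have tat: "filterlim t (at 0) sequentially"
    by (rule filterlim_atI[OF tlim]) (use tpos in \<open>auto elim: eventually_mono\<close>)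
  have glim: "((\<lambda>n. ((1 + t n)^k - 1) / t n) \<longlongrightarrow> real k) sequentially"
    using filterlim_compose[OF g_lim tat] by (simp add: o_def)
  have mainlim: "((\<lambda>n. r * c * lam * (((1 + t n)^k - 1) / t n) / (1 - x n ^ k))
           \<longlongrightarrow> r * c * lam * real k / (1 - 0 ^ k)) sequentially"
    by (intro tendsto_intros glim xlim) (use k1 in \<open>auto simp: power_0_left\<close>)
  have eqs: "\<forall>\<^sub>F n in sequentially. r * c * lam * (((1 + t n)^k - 1) / t n) / (1 - x n ^ k)
     = r * mm \<alpha> n * (ff k \<alpha> p n (eta1 k \<alpha> lam n) - 1)"
    using ev2 proof eventually_elim
    case (elim n)
    have n0: "real n > 0" using elim by simp
    have lnpos: "ln (real n) > 0" using elim by simp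
    have E1: "1 / dd \<alpha> n = x n" unfolding dd_def x_def using n0 by (simp add: powr_minus_divide)
    have E2: "ln (dd \<alpha> n) = \<alpha> * ln (real n)" unfolding dd_def using n0 by (simp add: ln_powr)
    have P1: "real n powr (-\<alpha>) * real n powr (real k*\<alpha>-1) * real n powr (1 - (real k - 1) * \<alpha>) = 1"
      using n0 by (simp add: powr_add[symmetric] algebra_simps)
    have E3: "eta1 k \<alpha> lam n = x n * (1 + t n)"
    proof -
      have "x n * t n = lam / (real n powr (1 - (real k - 1) * \<alpha>) * (\<alpha> * ln (real n)))"
        unfolding x_def t_def using P1 a lnpos n0
        by (simp add: field_simps)
      then show ?thesis unfolding eta1_def E1 E2 by (simp add: algebra_simps)
    qed
    have xk: "x n ^ k = real n powr (- (real k * \<alpha>))"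
      unfolding x_def using n0 by (simp add: powr_power)
    have P2: "real n * real n powr (- (real k * \<alpha>)) * real n powr (real k*\<alpha>-1) = 1"
      using n0 by (simp add: powr_add[symmetric] powr_mult_base algebra_simps)
    have E4: "mm \<alpha> n * x n ^ k * t n = lam"
      unfolding mm_def E2 xk t_def using P2 a lnpos
      by (simp add: field_simps)
    have tne: "t n \<noteq> 0" unfolding t_def using a lam lnpos n0 by simp
    have xk1: "x n ^ k < 1"
    proof -
      have "x n < 1" unfolding x_def using elim a by (intro powr_less_one) auto
      moreover have "x n \<ge> 0" unfolding x_def by simp
      ultimately show ?thesis using k1 by (simp add: power_less_one_iff)
    qed
    have "(x n * (1 + t n))^k = x n ^ k * (1 + t n)^k" by (rule power_mult_distrib)
    then have "ff k \<alpha> p n (eta1 k \<alpha> lam n) - 1 = c * (x n ^ k * ((1 + t n)^k - 1)) / (1 - x n ^ k)"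
      unfolding ff_def E1 E3 c_def by (simp add: algebra_simps)
    from aux_alg[OF tne _ this, of r "mm \<alpha> n"] xk1 show ?case unfolding E4 by simp
  qed
  have "((\<lambda>n. r * mm \<alpha> n * (ff k \<alpha> p n (eta1 k \<alpha> lam n) - 1)) \<longlongrightarrow> r * c * lam * real k / (1 - 0 ^ k)) sequentially"
    by (rule Lim_transform_eventually[OF mainlim eqs])
  moreover have "(0::real)^k = 0" using k1 by simp
  ultimately show ?thesis by (simp add: c_def)
qed

theorem lemma4p3:
  fixes k :: nat and \<alpha> r p lam :: real
  assumes "k \<ge> 2" and "\<alpha> > 0" and "r > 0" and "0 < p" and "p < 1"
    and "(2 * real k - 1) * \<alpha> > 1" and "real k * \<alpha> \<le> 1"
    and "real k \<ge> tau p * ln (tau p) / (tau p - 1)"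
    and "r < r_cr p"
    and "lam > 0"
  shows "\<exists>\<epsilon> :: nat \<Rightarrow> real. \<epsilon> \<longlonglongrightarrow> 0 \<and>
    (\<forall>\<^sub>F n in sequentially.
       (\<Sum>S \<in> {S \<in> {0..n}. real S \<le> real n * eta1 k \<alpha> lam n}. Phi k \<alpha> r p n S)
         \<le> exp (real k * lam * p * r / (1 - p)) + \<epsilon> n)"
proof -
  note a = assms(2) and ka = assms(7) and lam = assms(10) and p = assms(4,5) and r = assms(3)
  have k1: "k \<ge> 1" using assms(1) by simp
  define C where "C = real k * lam * p * r / (1 - p)"
  define E where "E n = exp (r * mm \<alpha> n * (ff k \<alpha> p n (eta1 k \<alpha> lam n) - 1))" for n
  define c where "c = p/(1-p)"
  have cpos: "c > 0" unfolding c_def using p by simp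
  have KL: "((\<lambda>n. r * mm \<alpha> n * (ff k \<alpha> p n (eta1 k \<alpha> lam n) - 1)) \<longlongrightarrow> C) sequentially"
    using key_lim[OF a ka lam p k1, of r] unfolding C_def by (simp add: field_simps)
  have El: "((\<lambda>n. E n - exp C) \<longlongrightarrow> 0) sequentially"
    unfolding E_def using tendsto_diff[OF tendsto_exp[OF KL] tendsto_const[of "exp C"]] by simp
  have ylim: "((\<lambda>n::nat. (1 / dd \<alpha> n)^k) \<longlongrightarrow> 0^k) sequentially"
  proof (intro tendsto_power)
    have "((\<lambda>n::nat. real n powr (-\<alpha>)) \<longlongrightarrow> 0) sequentially"
      using a by (intro tendsto_neg_powr filterlim_real_sequentially) auto
    then show "((\<lambda>n::nat. 1 / dd \<alpha> n) \<longlongrightarrow> 0) sequentially"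
      by (rule Lim_transform_eventually)
         (auto simp: dd_def powr_minus_divide intro!: eventually_mono[OF eventually_ge_at_top[of 1]])
  qed
  have z: "(0::real)^k = 0" using k1 by simp
  have ysmall: "\<forall>\<^sub>F n in sequentially. (1 / dd \<alpha> n)^k < 1 / (1 + c)"
    using order_tendstoD(2)[OF ylim, of "1/(1+c)"] cpos z by simp
  have ev: "\<forall>\<^sub>F n in sequentially.
       (\<Sum>S \<in> {S \<in> {0..n}. real S \<le> real n * eta1 k \<alpha> lam n}. Phi k \<alpha> r p n S) \<le> E n"
    using ysmall eventually_ge_at_top[of 2] proof eventually_elim
    case (elim n)
    define y where "y = 1 / dd \<alpha> n"
    define e where "e = eta1 k \<alpha> lam n"
    define A where "A = {S \<in> {0..n}. real S \<le> real n * e}"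
    have n0: "real n > 1" using elim by simp
    have y: "0 < y" "y < 1" unfolding y_def dd_def using n0 a
      by (auto simp: powr_minus_divide[symmetric] intro!: powr_less_one)
    have yk: "y^k < 1/(1+c)" using elim unfolding y_def by simp
    have yk1: "y^k < 1" using yk cpos by (smt (verit) divide_le_eq_1_pos)
    have ykc: "y^k * (1 + c) < 1" using yk cpos by (simp add: field_simps)
    have mmpos: "mm \<alpha> n > 0" unfolding mm_def dd_def using n0 a by (simp add: ln_powr)
    have e0: "e \<ge> 0" unfolding e_def eta1_def dd_def using lam a n0
      by (auto simp: ln_powr intro!: add_nonneg_nonneg divide_nonneg_nonneg mult_nonneg_nonneg)
    have ffe: "\<And>s. 0 \<le> s \<Longrightarrow> s \<le> e \<Longrightarrow> 0 < ff k \<alpha> p n s \<and> ff k \<alpha> p n s \<le> ff k \<alpha> p n e"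
    proof -
      fix s :: real assume s: "0 \<le> s" "s \<le> e"
      have sk: "s^k \<le> e^k" using s by (intro power_mono) auto
      have ffd: "ff k \<alpha> p n s = 1 + c * ((s^k - y^k) / (1 - y^k))" for s
        unfolding ff_def c_def y_def by simp
      have "c * ((s^k - y^k) / (1 - y^k)) \<le> c * ((e^k - y^k) / (1 - y^k))"
        using sk yk1 cpos by (intro mult_left_mono divide_right_mono) auto
      moreover have "c * ((0 - y^k) / (1 - y^k)) \<le> c * ((s^k - y^k) / (1 - y^k))"
        using s yk1 cpos by (intro mult_left_mono divide_right_mono) auto
      moreover have "1 + c * ((0 - y^k) / (1 - y^k)) > 0"
        using ykc yk1 by (simp add: field_simps)
      ultimately show "0 < ff k \<alpha> p n s \<and> ff k \<alpha> p n s \<le> ff k \<alpha> p n e"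
        unfolding ffd by linarith
    qed
    have Epos: "ff k \<alpha> p n e powr (r * mm \<alpha> n) \<le> E n"
    proof -
      have fpos: "ff k \<alpha> p n e > 0" using ffe[OF e0 order.refl] by simp
      have "ff k \<alpha> p n e powr (r * mm \<alpha> n) = exp (r * mm \<alpha> n * ln (ff k \<alpha> p n e))"
        using fpos by (simp add: powr_def)
      also have "\<dots> \<le> E n" unfolding E_def e_def[symmetric]
        using ln_le_minus_one[OF fpos] r mmpos by (intro exp_mono mult_left_mono) auto
      finally show ?thesis .
    qed
    have Bnn: "BB \<alpha> n S \<ge> 0" for S unfolding BB_def using y unfolding y_def by simp
    have step: "Phi k \<alpha> r p n S \<le> BB \<alpha> n S * E n" if "S \<in> A" for S
    proof -
      have S: "real S \<le> real n * e" using that unfolding A_def by simp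
      have s0: "0 \<le> real S / real n" by simp
      have se: "real S / real n \<le> e" using S n0 by (simp add: field_simps)
      have "WW k \<alpha> r p n S \<le> ff k \<alpha> p n e powr (r * mm \<alpha> n)"
        unfolding WW_def using ffe[OF s0 se] r mmpos by (intro powr_mono2) auto
      then have "WW k \<alpha> r p n S \<le> E n" using Epos by linarith
      then show ?thesis unfolding Phi_def using Bnn by (intro mult_left_mono) auto
    qed
    have "(\<Sum>S\<in>A. Phi k \<alpha> r p n S) \<le> (\<Sum>S\<in>A. BB \<alpha> n S * E n)"
      by (intro sum_mono step)
    also have "\<dots> \<le> (\<Sum>S\<in>{0..n}. BB \<alpha> n S * E n)"
      using Bnn unfolding A_def by (intro sum_mono2) (auto simp: E_def)
    also have "\<dots> = (\<Sum>S\<in>{0..n}. BB \<alpha> n S) * E n" by (simp add: sum_distrib_right)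
    also have "(\<Sum>S\<in>{0..n}. BB \<alpha> n S) = 1"
    proof -
      have "(y + (1 - y))^n = (\<Sum>S\<le>n. real (n choose S) * y^S * (1-y)^(n-S))"
        by (rule binomial_ring)
      then show ?thesis unfolding BB_def y_def[symmetric] by (simp add: atLeast0AtMost)
    qed
    finally show ?case unfolding A_def e_def by simp
  qed
  show ?thesis
  proof (intro exI conjI)
    show "((\<lambda>n. E n - exp C) \<longlongrightarrow> 0) sequentially" by (rule El)
    show "\<forall>\<^sub>F n in sequentially.
       (\<Sum>S \<in> {S \<in> {0..n}. real S \<le> real n * eta1 k \<alpha> lam n}. Phi k \<alpha> r p n S)
         \<le> exp (real k * lam * p * r / (1 - p)) + (E n - exp C)"
      using ev unfolding C_def by simp
  qed
qed

end
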